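(* Let $v\in\mathbb R$, $c\in\mathcal M_v$, $L\in\Gamma_{(d,d-1)}$, and $z=\exp(iL)c$. Then: (i) there exist $M\in\mathcal C_+$ and $c'\in X_d$, arbitrarily close to $L$ and $c$ respectively, such that $z=\exp(iL)c=\exp(iM)c'$; (ii) for every neighborhood $W$ of $(L,c)$ in $\mathcal G\times X_d$ there is a neighborhood $V$ of $z$ in $X_d^{(c)}$ such that every $z''\in V$ can be written as $z''=\exp(iM'')c''$ with $M''\in\mathcal C_+$ and $(M'',c'')\in W$.
   Context: Let $d\ge2$. $E_{d+1}=\mathbb R^{d+1}$, $E^{(c)}_{d+1}=\mathbb C^{d+1}$ with bilinear form $(x,y)=x^0y^0+x^dy^d-\sum_{j=1}^{d-1}x^jy^j$, canonical basis $e_0,\dots,e_d$. $X_d=\{x\in E_{d+1}:(x,x)=1\}$, $X_d^{(c)}=\{z\in E^{(c)}_{d+1}:(z,z)=1\}$. $G_0$ is the identity component of the group of real linear maps preserving the form, $\mathcal G$ its Lie algebra (real linear maps $A$ with $(Ax,y)=-(x,Ay)$); $\exp$ is the matrix exponential. $\ell(a\wedge b)x=a(b,x)-b(a,x)$. $\mathcal C_1=\{\ell(a\wedge b):(a,a)=(b,b)=1,(a,b)=0,a^0b^d-a^db^0>0\}$, $\mathcal C_+=\bigcup_{\rho>0}\rho\,\mathcal C_1$. $\mathcal M_v=\{x\in X_d:x^{d-1}+x^d=e^v\}$. $L_\mu=\ell(e_\mu\wedge(e_d-e_{d-1}))$ for $0\le\mu\le d-2$, and $\Gamma_{(d,d-1)}=\{\sum_{\mu=0}^{d-2}b^\mu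 L_\mu: b^0>(\sum_{j=1}^{d-2}(b^j)^2)^{1/2}\}$. *)

theory Defs
  imports "HOL-Analysis.Analysis"
begin

text \<open>Vectors of E_{d+1} (resp. its complexification) are functions nat => 'a
  vanishing outside the index range 0..d; linear maps are (d+1)x(d+1) matrices
  given as nat => nat => 'a, vanishing outside {0..d} x {0..d}.\<close>

definition vecs :: "nat \<Rightarrow> (nat \<Rightarrow> 'a::zero) set" where
  "vecs d = {x. \<forall>j>d. x j = 0}"

definition mats :: "nat \<Rightarrow> (nat \<Rightarrow> nat \<Rightarrow> 'a::zero) set" where
  "mats d = {A. \<forall>i j. (d < i \<or> d < j) \<longrightarrow> A i j = 0}"

definition unitv :: "nat \<Rightarrow> nat \<Rightarrow> 'a::{zero,one}" where
  "unitv k = (\<lambda>j. if j = k then 1 else 0)"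

definition form :: "nat \<Rightarrow> (nat \<Rightarrow> 'a::comm_ring_1) \<Rightarrow> (nat \<Rightarrow> 'a) \<Rightarrow> 'a" where
  "form d x y = x 0 * y 0 + x d * y d - (\<Sum>j\<in>{1..d-1}. x j * y j)"

definition Xd :: "nat \<Rightarrow> (nat \<Rightarrow> real) set" where
  "Xd d = {x \<in> vecs d. form d x x = 1}"

definition Xdc :: "nat \<Rightarrow> (nat \<Rightarrow> complex) set" where
  "Xdc d = {z \<in> vecs d. form d z z = 1}"

definition mapply :: "nat \<Rightarrow> (nat \<Rightarrow> nat \<Rightarrow> 'a::comm_ring_1) \<Rightarrow> (nat \<Rightarrow> 'a) \<Rightarrow> nat \<Rightarrow> 'a" where
  "mapply d A x = (\<lambda>i. if i \<le> d then (\<Sum>j\<le>d. A i j * x j) else 0)"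

definition mmult :: "nat \<Rightarrow> (nat \<Rightarrow> nat \<Rightarrow> 'a::comm_ring_1) \<Rightarrow> (nat \<Rightarrow> nat \<Rightarrow> 'a) \<Rightarrow> nat \<Rightarrow> nat \<Rightarrow> 'a" where
  "mmult d A B = (\<lambda>i j. if i \<le> d \<and> j \<le> d then (\<Sum>k\<le>d. A i k * B k j) else 0)"

definition mone :: "nat \<Rightarrow> nat \<Rightarrow> nat \<Rightarrow> 'a::comm_ring_1" where
  "mone d = (\<lambda>i j. if i = j \<and> i \<le> d then 1 else 0)"

primrec mpow :: "nat \<Rightarrow> (nat \<Rightarrow> nat \<Rightarrow> 'a::comm_ring_1) \<Rightarrow> nat \<Rightarrow> nat \<Rightarrow> nat \<Rightarrow> 'a" where
  "mpow d A 0 = mone d"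
| "mpow d A (Suc n) = mmult d A (mpow d A n)"

definition mexp :: "nat \<Rightarrow> (nat \<Rightarrow> nat \<Rightarrow> complex) \<Rightarrow> nat \<Rightarrow> nat \<Rightarrow> complex" where
  "mexp d A = (\<lambda>i j. (\<Sum>n. mpow d A n i j / of_nat (fact n)))"

definition expi_apply :: "nat \<Rightarrow> (nat \<Rightarrow> nat \<Rightarrow> real) \<Rightarrow> (nat \<Rightarrow> real) \<Rightarrow> nat \<Rightarrow> complex" where
  "expi_apply d L c = mapply d (mexp d (\<lambda>i j. \<i> * complex_of_real (L i j))) (\<lambda>j. complex_of_real (c j))"

definition LieG :: "nat \<Rightarrow> (nat \<Rightarrow> nat \<Rightarrow> real) set" where
  "LieG d = {A \<in> mats d. \<forall>x\<in>vecs d. \<forall>y\<in>vecs d. form d (mapply d A x) y = - form d x (mapply d A y)}"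

text \<open>Matrix of l(a /\ b): x |-> a (b,x) - b (a,x).\<close>
definition ell :: "nat \<Rightarrow> (nat \<Rightarrow> real) \<Rightarrow> (nat \<Rightarrow> real) \<Rightarrow> nat \<Rightarrow> nat \<Rightarrow> real" where
  "ell d a b = (\<lambda>i j. if i \<le> d \<and> j \<le> d then a i * form d b (unitv j) - b i * form d a (unitv j) else 0)"

definition C1 :: "nat \<Rightarrow> (nat \<Rightarrow> nat \<Rightarrow> real) set" where
  "C1 d = {ell d a b | a b. a \<in> vecs d \<and> b \<in> vecs d \<and> form d a a = 1 \<and> form d b b = 1
            \<and> form d a b = 0 \<and> a 0 * b d - a d * b 0 > 0}"

definition Cplus :: "nat \<Rightarrow> (nat \<Rightarrow> nat \<Rightarrow> real) set" where
  "Cplus d = {(\<lambda>i j. \<rho> * M i j) | \<rho> M. \<rho> > 0 \<and> M \<in> C1 d}"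

definition Mv :: "nat \<Rightarrow> real \<Rightarrow> (nat \<Rightarrow> real) set" where
  "Mv d v = {x \<in> Xd d. x (d-1) + x d = exp v}"

definition Lmu :: "nat \<Rightarrow> nat \<Rightarrow> nat \<Rightarrow> nat \<Rightarrow> real" where
  "Lmu d \<mu> = ell d (unitv \<mu>) (\<lambda>j. unitv d j - unitv (d-1) j)"

definition Gamma_dd1 :: "nat \<Rightarrow> (nat \<Rightarrow> nat \<Rightarrow> real) set" where
  "Gamma_dd1 d = {(\<lambda>i j. \<Sum>\<mu>\<in>{0..d-2}. b \<mu> * Lmu d \<mu> i j) | b.
                   b 0 > sqrt (\<Sum>j\<in>{1..d-2}. (b j)^2)}"

definition vdist :: "nat \<Rightarrow> (nat \<Rightarrow> 'a::real_normed_vector) \<Rightarrow> (nat \<Rightarrow> 'a) \<Rightarrow> real" where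
  "vdist d x y = sqrt (\<Sum>i\<le>d. (norm (x i - y i))^2)"

definition matdist :: "nat \<Rightarrow> (nat \<Rightarrow> nat \<Rightarrow> real) \<Rightarrow> (nat \<Rightarrow> nat \<Rightarrow> real) \<Rightarrow> real" where
  "matdist d A B = sqrt (\<Sum>i\<le>d. \<Sum>j\<le>d. (A i j - B i j)^2)"

end

theory Submission
  imports Defs "HOL-Real_Asymp.Real_Asymp"
begin

definition wt :: "nat \<Rightarrow> nat \<Rightarrow> 'a::comm_ring_1" where
  "wt d k = (if k = 0 \<or> k = d then 1 else -1)"

lemma form_wt:
  assumes "1 \<le> d"
  shows "form d x y = (\<Sum>k\<le>d. wt d k * x k * y k)"
proof -
  have "{..d} = insert 0 (insert d {1..d-1})" using assms by auto
  moreover have "(\<Sum>k\<in>{1..d-1}. wt d k * x k * y k) = - (\<Sum>k\<in>{1..d-1}. x k * y k)"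
    by (simp add: sum_negf[symmetric], intro sum.cong) (auto simp: wt_def)
  ultimately show ?thesis using assms by (simp add: form_def wt_def)
qed

lemma form_unitv:
  assumes "1 \<le> d"
  shows "form d x (unitv k) = (if k \<le> d then wt d k * x k else 0)"
  using assms by (auto simp: form_wt unitv_def if_distrib sum.delta cong: if_cong)

lemma sum_form_unitv:
  assumes "1 \<le> d"
  shows "(\<Sum>k\<le>d. form d a (unitv k) * c k) = form d a c"
proof -
  have "(\<Sum>k\<le>d. form d a (unitv k) * c k) = (\<Sum>k\<le>d. wt d k * a k * c k)"
    using assms by (intro sum.cong) (auto simp: form_unitv)
  then show ?thesis using assms by (simp add: form_wt)
qed

lemma form_sym: "form d x y = form d y x"
  by (simp add: form_def mult.commute)

lemma form_add1 [simp]: "form d (\<lambda>k. u k + v k) w = form d u w + form d v w"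
  by (simp add: form_def sum.distrib algebra_simps)
lemma form_diff1 [simp]: "form d (\<lambda>k. u k - v k) w = form d u w - form d v w"
  by (simp add: form_def sum_subtractf algebra_simps)
lemma form_scale1 [simp]: "form d (\<lambda>k. r * u k) w = r * form d u w"
  by (simp add: form_def sum_distrib_left algebra_simps)
lemma form_neg1 [simp]: "form d (\<lambda>k. - u k) w = - form d u w"
  by (simp add: form_def sum_negf algebra_simps)
lemma form_add2 [simp]: "form d w (\<lambda>k. u k + v k) = form d w u + form d w v"
  by (simp add: form_def sum.distrib algebra_simps)
lemma form_diff2 [simp]: "form d w (\<lambda>k. u k - v k) = form d w u - form d w v"
  by (simp add: form_def sum_subtractf algebra_simps)
lemma form_scale2 [simp]: "form d w (\<lambda>k. r * u k) = r * form d w u"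
  by (simp add: form_def sum_distrib_left algebra_simps)
lemma form_neg2 [simp]: "form d w (\<lambda>k. - u k) = - form d w u"
  by (simp add: form_def sum_negf algebra_simps)
lemma form_scale1r [simp]: "form d (\<lambda>k. u k * r) w = form d u w * r"
  by (simp add: form_def sum_distrib_right algebra_simps)
lemma form_scale2r [simp]: "form d w (\<lambda>k. u k * r) = form d w u * r"
  by (simp add: form_def sum_distrib_right algebra_simps)
lemma form_ofreal [simp]: "form d (\<lambda>k. complex_of_real (u k)) (\<lambda>k. complex_of_real (w k)) = complex_of_real (form d u w)"
  by (simp add: form_def)

lemma ell_apply:
  assumes "1 \<le> d" "i \<le> d"
  shows "(\<Sum>k\<le>d. ell d a b i k * c k) = a i * form d b c - b i * form d a c"
proof -
  have "(\<Sum>k\<le>d. ell d a b i k * c k) = (\<Sum>k\<le>d. a i * (form d b (unitv k) * c k) - b i * (form d a (unitv k) * c k))"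
    using assms by (intro sum.cong) (auto simp: ell_def algebra_simps)
  also have "\<dots> = a i * form d b c - b i * form d a c"
    using assms by (simp add: sum_subtractf sum_distrib_left[symmetric] sum_form_unitv)
  finally show ?thesis .
qed

lemma form_cong2:
  assumes "\<And>k. k \<le> d \<Longrightarrow> u k = u' k"
  shows "form d w u = form d w u'"
  using assms unfolding form_def by (auto intro!: sum.cong)

definition Pm :: "nat \<Rightarrow> (nat \<Rightarrow> real) \<Rightarrow> (nat \<Rightarrow> real) \<Rightarrow> nat \<Rightarrow> nat \<Rightarrow> real" where
  "Pm d a b = (\<lambda>i j. if i \<le> d \<and> j \<le> d then a i * form d a (unitv j) + b i * form d b (unitv j) else 0)"

lemma ell_ell:
  assumes "1 \<le> d" "i \<le> d" "j \<le> d"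
  shows "(\<Sum>k\<le>d. ell d a b i k * ell d a b k j) =
     a i * (form d b a * form d b (unitv j) - form d b b * form d a (unitv j))
   - b i * (form d a a * form d b (unitv j) - form d a b * form d a (unitv j))"
proof -
  have e: "form d w (\<lambda>k. ell d a b k j) = form d w (\<lambda>k. form d b (unitv j) * a k - form d a (unitv j) * b k)" for w
    using assms by (intro form_cong2) (auto simp: ell_def mult.commute)
  have "(\<Sum>k\<le>d. ell d a b i k * ell d a b k j) = a i * form d b (\<lambda>k. ell d a b k j) - b i * form d a (\<lambda>k. ell d a b k j)"
    by (rule ell_apply[OF assms(1,2)])
  then show ?thesis by (simp add: e algebra_simps)
qed

lemma ell_Pm:
  assumes "1 \<le> d" "i \<le> d" "j \<le> d"
  shows "(\<Sum>k\<le>d. ell d a b i k * Pm d a b k j) =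
     a i * (form d b a * form d a (unitv j) + form d b b * form d b (unitv j))
   - b i * (form d a a * form d a (unitv j) + form d a b * form d b (unitv j))"
proof -
  have e: "form d w (\<lambda>k. Pm d a b k j) = form d w (\<lambda>k. form d a (unitv j) * a k + form d b (unitv j) * b k)" for w
    using assms by (intro form_cong2) (auto simp: Pm_def mult.commute)
  have "(\<Sum>k\<le>d. ell d a b i k * Pm d a b k j) = a i * form d b (\<lambda>k. Pm d a b k j) - b i * form d a (\<lambda>k. Pm d a b k j)"
    by (rule ell_apply[OF assms(1,2)])
  then show ?thesis by (simp add: e algebra_simps)
qed

lemma Pm_apply:
  assumes "1 \<le> d" "i \<le> d"
  shows "(\<Sum>k\<le>d. Pm d a b i k * c k) = a i * form d a c + b i * form d b c"
proof -
  have "(\<Sum>k\<le>d. Pm d a b i k * c k) = (\<Sum>k\<le>d. a i * (form d a (unitv k) * c k) + b i * (form d b (unitv k) * c k))"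
    using assms by (intro sum.cong) (auto simp: Pm_def algebra_simps)
  also have "\<dots> = a i * form d a c + b i * form d b c"
    using assms by (simp add: sum.distrib sum_distrib_left[symmetric] sum_form_unitv)
  finally show ?thesis .
qed

lemma mone_apply:
  assumes "i \<le> d"
  shows "(\<Sum>k\<le>d. mone d i k * c k) = c i"
proof -
  have "(\<Sum>k\<le>d. mone d i k * c k) = (\<Sum>k\<le>d. if k = i then c k else 0)"
    by (intro sum.cong) (auto simp: mone_def)
  then show ?thesis using assms by simp
qed


locale orth =
  fixes d :: nat and a b :: "nat \<Rightarrow> real"
  assumes d1: "1 \<le> d" and aa: "form d a a = 1" and bb: "form d b b = 1" and ab: "form d a b = 0"
begin

lemma ba: "form d b a = 0" using ab by (simp add: form_sym)

lemma EE: "i \<le> d \<Longrightarrow> j \<le> d \<Longrightarrow> (\<Sum>k\<le>d. ell d a b i k * ell d a b k j) = - Pm d a b i j"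
  using ell_ell[OF d1, of i j a b] by (simp add: aa bb ab ba Pm_def)

lemma EP: "i \<le> d \<Longrightarrow> j \<le> d \<Longrightarrow> (\<Sum>k\<le>d. ell d a b i k * Pm d a b k j) = ell d a b i j"
  using ell_Pm[OF d1, of i j a b] by (simp add: aa bb ab ba ell_def)

lemma mpow_rot:
  "mpow d (\<lambda>i j. \<i> * complex_of_real (\<rho> * ell d a b i j)) n =
    (\<lambda>i j. if n = 0 then mone d i j else if even n then complex_of_real (\<rho>^n * Pm d a b i j)
           else \<i> * complex_of_real (\<rho>^n * ell d a b i j))"
proof (induction n)
  case 0
  then show ?case by (simp add: mone_def)
next
  case (Suc n)
  show ?case
  proof (intro ext)
    fix i j
    show "mpow d (\<lambda>i j. \<i> * complex_of_real (\<rho> * ell d a b i j)) (Suc n) i j =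
      (if Suc n = 0 then mone d i j else if even (Suc n) then complex_of_real (\<rho> ^ Suc n * Pm d a b i j)
       else \<i> * complex_of_real (\<rho> ^ Suc n * ell d a b i j))"
    proof (cases "i \<le> d \<and> j \<le> d")
      case False
      then show ?thesis by (auto simp: mmult_def Pm_def ell_def)
    next
      case True
      then have ij: "i \<le> d" "j \<le> d" by auto
      have lhs: "mpow d (\<lambda>i j. \<i> * complex_of_real (\<rho> * ell d a b i j)) (Suc n) i j =
         (\<Sum>k\<le>d. \<i> * complex_of_real (\<rho> * ell d a b i k) *
            (if n = 0 then mone d k j else if even n then complex_of_real (\<rho>^n * Pm d a b k j)
           else \<i> * complex_of_real (\<rho>^n * ell d a b k j)))"
        using True Suc.IH by (simp add: mmult_def)
      show ?thesis
      proof (cases "n = 0")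
        case True
        have "(\<Sum>k\<le>d. \<i> * complex_of_real (\<rho> * ell d a b i k) * mone d k j) =
              (\<Sum>k\<le>d. if k = j then \<i> * complex_of_real (\<rho> * ell d a b i k) else 0)"
          by (intro sum.cong) (auto simp: mone_def)
        then show ?thesis using lhs True ij by simp
      next
        case n0: False
        show ?thesis
        proof (cases "even n")
          case True
          have "(\<Sum>k\<le>d. \<i> * complex_of_real (\<rho> * ell d a b i k) * complex_of_real (\<rho>^n * Pm d a b k j))
             = \<i> * complex_of_real (\<rho>^Suc n * (\<Sum>k\<le>d. ell d a b i k * Pm d a b k j))"
            by (simp add: sum_distrib_left algebra_simps)
          then show ?thesis using lhs True n0 ij by (simp add: EP)
        next
          case False
          have "(\<Sum>k\<le>d. \<i> * complex_of_real (\<rho> * ell d a b i k) * (\<i> * complex_of_real (\<rho>^n * ell d a b k j)))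
             = - complex_of_real (\<rho>^Suc n * (\<Sum>k\<le>d. ell d a b i k * ell d a b k j))"
            by (simp add: sum_distrib_left algebra_simps sum_negf)
          then show ?thesis using lhs False n0 ij by (simp add: EE)
        qed
      qed
    qed
  qed
qed

lemma mexp_rot:
  "mexp d (\<lambda>i j. \<i> * complex_of_real (\<rho> * ell d a b i j)) i j =
    mone d i j + complex_of_real (((exp \<rho> + exp (-\<rho>))/2 - 1) * Pm d a b i j)
    + \<i> * complex_of_real ((exp \<rho> - exp (-\<rho>))/2 * ell d a b i j)"
proof -
  define Pc where "Pc = complex_of_real (Pm d a b i j)"
  define Ec where "Ec = \<i> * complex_of_real (ell d a b i j)"
  define I0 where "I0 = (mone d i j :: complex)"
  have trm: "mpow d (\<lambda>i j. \<i> * complex_of_real (\<rho> * ell d a b i j)) n i j / of_nat (fact n) =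
     (complex_of_real \<rho>)^n /\<^sub>R fact n * ((Pc+Ec)/2) + (complex_of_real (-\<rho>))^n /\<^sub>R fact n * ((Pc-Ec)/2)
      + (if n = 0 then I0 - Pc else 0)" for n
  proof (cases "n = 0")
    case True then show ?thesis by (simp add: mpow_rot I0_def field_simps)
  next
    case False
    show ?thesis
    proof (cases "even n")
      case True
      then have "(-\<rho>)^n = \<rho>^n" by (simp add: power_minus_even)
      then show ?thesis using True False
        by (simp only: mpow_rot) (simp add: Pc_def Ec_def scaleR_conv_of_real field_simps)
    next
      case odd: False
      then have "(-\<rho>)^n = - (\<rho>^n)" by (simp add: power_minus_odd)
      then show ?thesis using odd False
        by (simp only: mpow_rot) (simp add: Pc_def Ec_def scaleR_conv_of_real field_simps)
    qed
  qed
  have "(\<lambda>n. (complex_of_real \<rho>)^n /\<^sub>R fact n * ((Pc+Ec)/2) + (complex_of_real (-\<rho>))^n /\<^sub>R fact n * ((Pc-Ec)/2)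
      + (if n = 0 then I0 - Pc else 0)) sums (exp (complex_of_real \<rho>) * ((Pc+Ec)/2) + exp (complex_of_real (-\<rho>)) * ((Pc-Ec)/2) + (I0 - Pc))"
    by (intro sums_add sums_mult2 exp_converges) (rule sums_single)
  then have "(\<lambda>n. mpow d (\<lambda>i j. \<i> * complex_of_real (\<rho> * ell d a b i j)) n i j / of_nat (fact n)) sums
       (exp (complex_of_real \<rho>) * ((Pc+Ec)/2) + exp (complex_of_real (-\<rho>)) * ((Pc-Ec)/2) + (I0 - Pc))"
    by (simp only: trm)
  then have "mexp d (\<lambda>i j. \<i> * complex_of_real (\<rho> * ell d a b i j)) i j =
       exp (complex_of_real \<rho>) * ((Pc+Ec)/2) + exp (complex_of_real (-\<rho>)) * ((Pc-Ec)/2) + (I0 - Pc)"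
    unfolding mexp_def by (simp add: sums_iff)
  also have "\<dots> = mone d i j + complex_of_real (((exp \<rho> + exp (-\<rho>))/2 - 1) * Pm d a b i j)
    + \<i> * complex_of_real ((exp \<rho> - exp (-\<rho>))/2 * ell d a b i j)"
    by (simp add: Pc_def Ec_def I0_def exp_of_real[symmetric] field_simps)
  finally show ?thesis .
qed

lemma expi_rot:
  assumes "i \<le> d"
  shows "expi_apply d (\<lambda>i j. \<rho> * ell d a b i j) c i =
    complex_of_real (c i + ((exp \<rho> + exp (-\<rho>))/2 - 1) * (a i * form d a c + b i * form d b c))
    + \<i> * complex_of_real ((exp \<rho> - exp (-\<rho>))/2 * (a i * form d b c - b i * form d a c))"
proof -
  define ch where "ch = (exp \<rho> + exp (-\<rho>))/2 - 1"
  define sh where "sh = (exp \<rho> - exp (-\<rho>))/2"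
  have mo: "(mone d i j :: complex) = complex_of_real (mone d i j)" for i j
    by (simp add: mone_def)
  have "expi_apply d (\<lambda>i j. \<rho> * ell d a b i j) c i =
     (\<Sum>j\<le>d. (mone d i j + complex_of_real (ch * Pm d a b i j) + \<i> * complex_of_real (sh * ell d a b i j)) * complex_of_real (c j))"
    using assms unfolding expi_apply_def mapply_def by (simp only: mexp_rot ch_def sh_def) simp
  also have "\<dots> = complex_of_real (\<Sum>j\<le>d. mone d i j * c j) + complex_of_real (ch * (\<Sum>j\<le>d. Pm d a b i j * c j))
     + \<i> * complex_of_real (sh * (\<Sum>j\<le>d. ell d a b i j * c j))"
    by (simp add: mo algebra_simps sum.distrib sum_distrib_left)
  also have "\<dots> = complex_of_real (c i + ch * (a i * form d a c + b i * form d b c))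
    + \<i> * complex_of_real (sh * (a i * form d b c - b i * form d a c))"
    using assms d1 by (simp add: mone_apply Pm_apply ell_apply)
  finally show ?thesis by (simp add: ch_def sh_def)
qed

end

locale nil =
  fixes d :: nat and \<beta> nn :: "nat \<Rightarrow> real"
  assumes d1: "1 \<le> d" and bn: "form d \<beta> nn = 0" and nn: "form d nn nn = 0"
begin

definition Q where "Q = (\<lambda>i j. if i \<le> d \<and> j \<le> d then nn i * form d nn (unitv j) else 0)"

lemma nb: "form d nn \<beta> = 0" using bn by (simp add: form_sym)

lemma mpow_nil:
  "mpow d (\<lambda>i j. \<i> * complex_of_real (ell d \<beta> nn i j)) n =
    (\<lambda>i j. if n = 0 then mone d i j else if n = 1 then \<i> * complex_of_real (ell d \<beta> nn i j)
      else if n = 2 then complex_of_real (form d \<beta> \<beta> * Q i j) else 0)"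
proof (induction n)
  case 0
  then show ?case by simp
next
  case (Suc n)
  show ?case
  proof (intro ext)
    fix i j
    show "mpow d (\<lambda>i j. \<i> * complex_of_real (ell d \<beta> nn i j)) (Suc n) i j =
      (if Suc n = 0 then mone d i j else if Suc n = 1 then \<i> * complex_of_real (ell d \<beta> nn i j)
      else if Suc n = 2 then complex_of_real (form d \<beta> \<beta> * Q i j) else 0)"
    proof (cases "i \<le> d \<and> j \<le> d")
      case False
      then show ?thesis by (auto simp: mmult_def Q_def ell_def)
    next
      case True
      then have ij: "i \<le> d" "j \<le> d" by auto
      have lhs: "mpow d (\<lambda>i j. \<i> * complex_of_real (ell d \<beta> nn i j)) (Suc n) i j =
         (\<Sum>k\<le>d. \<i> * complex_of_real (ell d \<beta> nn i k) *
            (if n = 0 then mone d k j else if n = 1 then \<i> * complex_of_real (ell d \<beta> nn k j)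
      else if n = 2 then complex_of_real (form d \<beta> \<beta> * Q k j) else 0))"
        using True Suc.IH by (simp add: mmult_def)
      consider "n = 0" | "n = 1" | "n = 2" | "n > 2" by linarith
      then show ?thesis
      proof cases
        case 1
        have "(\<Sum>k\<le>d. \<i> * complex_of_real (ell d \<beta> nn i k) * mone d k j) =
              (\<Sum>k\<le>d. if k = j then \<i> * complex_of_real (ell d \<beta> nn i k) else 0)"
          by (intro sum.cong) (auto simp: mone_def)
        then show ?thesis using lhs 1 ij by simp
      next
        case 2
        have "(\<Sum>k\<le>d. \<i> * complex_of_real (ell d \<beta> nn i k) * (\<i> * complex_of_real (ell d \<beta> nn k j)))
             = - complex_of_real (\<Sum>k\<le>d. ell d \<beta> nn i k * ell d \<beta> nn k j)"
          by (simp add: sum_distrib_left algebra_simps sum_negf)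
        then show ?thesis using lhs 2 ij d1 by (simp add: ell_ell bn nb nn Q_def)
      next
        case 3
        have "(\<Sum>k\<le>d. \<i> * complex_of_real (ell d \<beta> nn i k) * complex_of_real (form d \<beta> \<beta> * Q k j))
             = \<i> * complex_of_real (form d \<beta> \<beta> * form d nn (unitv j) * (\<Sum>k\<le>d. ell d \<beta> nn i k * nn k))"
          using ij by (simp add: sum_distrib_left algebra_simps Q_def)
        then show ?thesis using lhs 3 ij d1 by (simp add: ell_apply bn nb nn)
      next
        case 4
        then show ?thesis using lhs by simp
      qed
    qed
  qed
qed

lemma mexp_nil:
  "mexp d (\<lambda>i j. \<i> * complex_of_real (ell d \<beta> nn i j)) i j =
    mone d i j + \<i> * complex_of_real (ell d \<beta> nn i j) + complex_of_real (form d \<beta> \<beta> * Q i j / 2)"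
proof -
  have "(\<lambda>n. mpow d (\<lambda>i j. \<i> * complex_of_real (ell d \<beta> nn i j)) n i j / of_nat (fact n)) sums
      (\<Sum>n\<in>{0,1,2}. mpow d (\<lambda>i j. \<i> * complex_of_real (ell d \<beta> nn i j)) n i j / of_nat (fact n))"
    by (rule sums_finite) (auto simp only: mpow_nil, auto split: if_splits)
  then show ?thesis unfolding mexp_def
    by (simp add: sums_iff mpow_nil)
qed

lemma expi_nil:
  assumes "i \<le> d"
  shows "expi_apply d (ell d \<beta> nn) c i =
    complex_of_real (c i + form d \<beta> \<beta> * form d nn c / 2 * nn i)
    + \<i> * complex_of_real (form d nn c * \<beta> i - form d \<beta> c * nn i)"
proof -
  have mo: "(mone d i j :: complex) = complex_of_real (mone d i j)" for i j
    by (simp add: mone_def)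
  have "expi_apply d (ell d \<beta> nn) c i =
     (\<Sum>j\<le>d. (mone d i j + \<i> * complex_of_real (ell d \<beta> nn i j) + complex_of_real (form d \<beta> \<beta> * Q i j / 2)) * complex_of_real (c j))"
    using assms unfolding expi_apply_def mapply_def by (simp only: mexp_nil) simp
  also have "\<dots> = complex_of_real (\<Sum>j\<le>d. mone d i j * c j) + complex_of_real (form d \<beta> \<beta> / 2 * nn i * (\<Sum>j\<le>d. form d nn (unitv j) * c j))
     + \<i> * complex_of_real (\<Sum>j\<le>d. ell d \<beta> nn i j * c j)"
    using assms by (simp add: mo algebra_simps sum.distrib sum_distrib_left Q_def)
  also have "\<dots> = complex_of_real (c i + form d \<beta> \<beta> * form d nn c / 2 * nn i)
    + \<i> * complex_of_real (form d nn c * \<beta> i - form d \<beta> c * nn i)"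
    using assms d1 unfolding mone_apply[OF assms] sum_form_unitv[OF d1] ell_apply[OF d1 assms]
    by (simp add: algebra_simps)
  finally show ?thesis .
qed

end

definition Gv :: "nat \<Rightarrow> (nat \<Rightarrow> real) \<Rightarrow> (nat \<Rightarrow> real) \<Rightarrow> real" where
  "Gv d p y = form d y y * form d p p - (form d p y)^2"
definition tv :: "nat \<Rightarrow> (nat \<Rightarrow> real) \<Rightarrow> (nat \<Rightarrow> real) \<Rightarrow> (nat \<Rightarrow> real) \<Rightarrow> real" where
  "tv d p x y = sqrt (Gv d p y) / form d x p"
definition rv :: "nat \<Rightarrow> (nat \<Rightarrow> real) \<Rightarrow> (nat \<Rightarrow> real) \<Rightarrow> (nat \<Rightarrow> real) \<Rightarrow> real" where
  "rv d p x y = ln ((1 + tv d p x y) / sqrt (1 - (tv d p x y)^2))"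
definition pperp :: "nat \<Rightarrow> (nat \<Rightarrow> real) \<Rightarrow> (nat \<Rightarrow> real) \<Rightarrow> nat \<Rightarrow> real" where
  "pperp d p y = (\<lambda>k. p k - (form d p y / form d y y) * y k)"
definition av :: "nat \<Rightarrow> (nat \<Rightarrow> real) \<Rightarrow> (nat \<Rightarrow> real) \<Rightarrow> nat \<Rightarrow> real" where
  "av d p y = (\<lambda>k. (1 / sqrt (Gv d p y / form d y y)) * pperp d p y k)"
definition bv :: "nat \<Rightarrow> (nat \<Rightarrow> real) \<Rightarrow> nat \<Rightarrow> real" where
  "bv d y = (\<lambda>k. (-1 / sqrt (form d y y)) * y k)"
definition cv :: "nat \<Rightarrow> (nat \<Rightarrow> real) \<Rightarrow> (nat \<Rightarrow> real) \<Rightarrow> (nat \<Rightarrow> real) \<Rightarrow> nat \<Rightarrow> real" where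
  "cv d p x y = (\<lambda>k. x k - ((1 - sqrt (1 - (tv d p x y)^2)) * (form d x p * form d y y / Gv d p y)) * pperp d p y k)"
definition MMv :: "nat \<Rightarrow> (nat \<Rightarrow> real) \<Rightarrow> (nat \<Rightarrow> real) \<Rightarrow> (nat \<Rightarrow> real) \<Rightarrow> nat \<Rightarrow> nat \<Rightarrow> real" where
  "MMv d p x y = (\<lambda>i j. rv d p x y * ell d (av d p y) (bv d y) i j)"

lemma form_div1 [simp]: "form d (\<lambda>k. u k / r) w = form d u w / (r::real)"
  using form_scale1[of d "1/r" u w] by simp
lemma form_div2 [simp]: "form d w (\<lambda>k. u k / r) = form d w u / (r::real)"
  using form_scale2[of d w "1/r" u] by simp

locale keyloc =
  fixes d :: nat and p x y :: "nat \<Rightarrow> real"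
  assumes d1: "1 \<le> d"
    and xy: "form d x y = 0" and Ypos: "form d y y > 0" and Gpos: "Gv d p y > 0"
    and Xpos: "form d x p > 0" and GX: "Gv d p y < (form d x p)^2"
begin

abbreviation "Y \<equiv> form d y y"
abbreviation "G \<equiv> Gv d p y"
abbreviation "X \<equiv> form d x p"
abbreviation "t \<equiv> tv d p x y"
abbreviation "q \<equiv> sqrt (1 - t^2)"

lemma yx: "form d y x = 0" using xy by (simp add: form_sym)

lemma t_pos: "t > 0" using Gpos Xpos by (simp add: tv_def)
lemma t_lt1: "t < 1"
proof -
  have "sqrt G < sqrt (X^2)" using GX by (simp only: real_sqrt_less_iff)
  then have "sqrt G < X" using Xpos by simp
  then show ?thesis using Xpos by (simp add: tv_def)
qed
lemma q_pos: "q > 0"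
proof -
  have "t^2 < 1" using t_pos t_lt1 by (simp add: power_less_one_iff)
  then show ?thesis by simp
qed
lemma q_sq: "q^2 = 1 - t^2"
proof -
  have "t^2 < 1" using t_pos t_lt1 by (simp add: power_less_one_iff)
  then show ?thesis by simp
qed
lemma t_sq: "t^2 = G / X^2" using Gpos Xpos by (simp add: tv_def power_divide)

lemma exp_r: "exp (rv d p x y) = (1 + t) / q"
  using t_pos q_pos by (simp add: rv_def)
lemma exp_mr: "exp (- rv d p x y) = q / (1 + t)"
  using t_pos q_pos by (simp add: exp_minus exp_r)
lemma ch: "(exp (rv d p x y) + exp (- rv d p x y))/2 = 1 / q"
proof -
  have e: "(1+t)^2 + q^2 = 2 * (1 + t)" using q_sq by (simp add: power2_eq_square algebra_simps)
  have "(1+t)/q + q/(1+t) = ((1+t)^2 + q^2) / (q * (1+t))"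
    using t_pos q_pos by (simp add: field_simps power2_eq_square)
  also have "\<dots> = 2 * (1 + t) / (q * (1+t))" using e by simp
  also have "\<dots> = 2 / q"
  proof -
    have "\<And>Q T. Q > 0 \<Longrightarrow> T > 0 \<Longrightarrow> 2 * (1 + T) / (Q * (1 + T)) = 2 / (Q::real)" by (subst mult_divide_mult_cancel_right) auto
    then show ?thesis using t_pos q_pos by blast
  qed
  finally show ?thesis unfolding exp_r exp_mr by simp
qed
lemma sh: "(exp (rv d p x y) - exp (- rv d p x y))/2 = t / q"
proof -
  have e: "(1+t)^2 - q^2 = 2 * t * (1 + t)" using q_sq by (simp add: power2_eq_square algebra_simps)
  have "(1+t)/q - q/(1+t) = ((1+t)^2 - q^2) / (q * (1+t))"
    using t_pos q_pos by (simp add: field_simps power2_eq_square)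
  also have "\<dots> = 2 * t * (1 + t) / (q * (1+t))" using e by simp
  also have "\<dots> = 2 * t / q" using t_pos q_pos by simp
  finally show ?thesis unfolding exp_r exp_mr by simp
qed
lemma r_pos: "rv d p x y > 0"
proof -
  have "q \<le> 1" using t_pos by simp
  then have "q < 1 + t" using t_pos by linarith
  then have "(1+t)/q > 1" using q_pos by simp
  then show ?thesis by (simp add: rv_def)
qed

lemma pp_y: "form d (pperp d p y) y = 0"
  using Ypos by (simp add: pperp_def)
lemma pp_pp: "form d (pperp d p y) (pperp d p y) = G / Y"
  using Ypos by (simp add: pperp_def Gv_def form_sym[of d y p] field_simps power2_eq_square)
lemma pp_x: "form d (pperp d p y) x = X"
  using Ypos by (simp add: pperp_def yx form_sym[of d p x])

lemma aa: "form d (av d p y) (av d p y) = 1"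
proof -
  have "sqrt (G/Y) * sqrt (G/Y) = G/Y" using Gpos Ypos
    by (metis divide_pos_pos less_eq_real_def real_sqrt_pow2 power2_eq_square)
  then have "Y * sqrt (G/Y) * sqrt (G/Y) = G" using Ypos by (simp add: mult.assoc)
  then show ?thesis using Ypos Gpos by (simp add: av_def pp_pp)
qed
lemma bb: "form d (bv d y) (bv d y) = 1"
  using Ypos by (simp add: bv_def)
lemma ab: "form d (av d p y) (bv d y) = 0"
  by (simp add: av_def bv_def pp_y)

end

context keyloc begin
abbreviation "r \<equiv> sqrt (G / Y)"
lemma rr: "r * r = G / Y" using Gpos Ypos
  by (metis divide_pos_pos less_eq_real_def real_sqrt_pow2 power2_eq_square)
lemma rsq_pos: "r > 0" using Gpos Ypos by simp
lemma Yr: "sqrt Y * r = sqrt G" using Gpos Ypos by (simp add: real_sqrt_mult[symmetric])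
lemma tX: "t * X = sqrt G" using Xpos by (simp add: tv_def)

lemma x_pp: "form d x (pperp d p y) = X" using pp_x by (simp add: form_sym)
lemma y_pp: "form d y (pperp d p y) = 0" using pp_y by (simp add: form_sym)

abbreviation "\<kappa> \<equiv> (1 - q) * (X * Y / G)"

lemma a_c: "form d (av d p y) (cv d p x y) = q * X / r"
proof -
  have "form d (av d p y) (cv d p x y) = (1/r) * (X - \<kappa> * (G / Y))"
    using Gpos Ypos by (simp add: av_def cv_def pp_x pp_pp diff_divide_distrib)
  also have "\<dots> = q * X / r" using Gpos Ypos rsq_pos by (simp add: field_simps)
  finally show ?thesis .
qed

lemma b_c: "form d (bv d y) (cv d p x y) = 0"
  by (simp add: bv_def cv_def yx y_pp)

lemma orth_ab: "orth d (av d p y) (bv d y)"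
  by (unfold_locales) (use d1 aa bb ab in auto)

lemma key_expi:
  assumes "i \<le> d"
  shows "expi_apply d (MMv d p x y) (cv d p x y) i = complex_of_real (x i) + \<i> * complex_of_real (y i)"
proof -
  interpret o: orth d "av d p y" "bv d y" by (rule orth_ab)
  have e: "expi_apply d (MMv d p x y) (cv d p x y) i =
    complex_of_real (cv d p x y i + (1/q - 1) * (av d p y i * (q * X / r)))
    + \<i> * complex_of_real (t / q * (- bv d y i * (q * X / r)))"
    unfolding MMv_def o.expi_rot[OF assms] ch sh a_c b_c by simp
  have re: "cv d p x y i + (1/q - 1) * (av d p y i * (q * X / r)) = x i"
  proof -
    have gen: "\<And>Q R P. Q > 0 \<Longrightarrow> R > 0 \<Longrightarrow> (1/Q - 1) * ((1/R * P) * (Q * X / R)) = (1 - Q) * X / (R * R) * P"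
      by (simp add: field_simps)
    have "(1/q - 1) * (av d p y i * (q * X / r)) = (1 - q) * X / (r * r) * pperp d p y i"
      unfolding av_def by (rule gen[OF q_pos rsq_pos])
    also have "\<dots> = \<kappa> * pperp d p y i" unfolding rr using Ypos Gpos by (simp add: field_simps)
    finally show ?thesis by (simp add: cv_def)
  qed
  have im: "t / q * (- bv d y i * (q * X / r)) = y i"
  proof -
    have gen: "\<And>Q R S T P. Q > 0 \<Longrightarrow> R > 0 \<Longrightarrow> S > 0 \<Longrightarrow> T / Q * (- (-1 / S * P) * (Q * X / R)) = (T * X) / (S * R) * P"
      by (simp add: field_simps)
    have "t / q * (- bv d y i * (q * X / r)) = (t * X) / (sqrt Y * r) * y i"
      unfolding bv_def by (rule gen[OF q_pos rsq_pos]) (use Ypos in simp)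
    also have "\<dots> = y i" unfolding Yr tX using Gpos by simp
    finally show ?thesis .
  qed
  show ?thesis unfolding e re im ..
qed

lemma cc_form: "form d (cv d p x y) (cv d p x y) = form d x x - Y"
proof -
  have "form d (cv d p x y) (cv d p x y) = form d x x - 2 * \<kappa> * X + \<kappa>^2 * (G / Y)"
    by (simp add: cv_def pp_x x_pp pp_pp power2_eq_square algebra_simps)
  also have "\<dots> = form d x x - (X^2 * Y / G) * (1 - q^2)"
  proof -
    have gen: "\<And>Q. 2 * ((1 - Q) * (X * Y / G)) * X - ((1 - Q) * (X * Y / G))^2 * (G / Y) = (X^2 * Y / G) * (1 - Q^2)"
      using Gpos Ypos by (simp add: power2_eq_square field_simps)
    show ?thesis using gen[of q] by linarith
  qed
  also have "\<dots> = form d x x - Y" unfolding q_sq using t_sq Gpos Xpos by (simp add: field_simps)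
  finally show ?thesis .
qed

lemma key_Cplus:
  assumes "p \<in> vecs d" "y \<in> vecs d" "y 0 * p d - y d * p 0 > 0"
  shows "MMv d p x y \<in> Cplus d"
proof -
  have av: "av d p y \<in> vecs d" and bv: "bv d y \<in> vecs d"
    using assms by (auto simp: vecs_def av_def bv_def pperp_def)
  have gen: "\<And>R S L. R > 0 \<Longrightarrow> S > 0 \<Longrightarrow>
     (1/R * (p 0 - L * y 0)) * (-1/S * y d) - (1/R * (p d - L * y d)) * (-1/S * y 0)
      = (y 0 * p d - y d * p 0) / (R * S)"
    by (simp add: field_simps)
  have "av d p y 0 * bv d y d - av d p y d * bv d y 0 = (y 0 * p d - y d * p 0) / (r * sqrt Y)"
    unfolding av_def bv_def pperp_def by (rule gen[OF rsq_pos]) (use Ypos in simp)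
  also have "\<dots> > 0" using assms(3) rsq_pos Ypos by simp
  finally have ori: "av d p y 0 * bv d y d - av d p y d * bv d y 0 > 0" .
  have "ell d (av d p y) (bv d y) \<in> C1 d"
    unfolding C1_def using av bv aa bb ab ori by blast
  then show ?thesis unfolding Cplus_def MMv_def using r_pos by blast
qed

lemma key_Xd:
  assumes "p \<in> vecs d" "y \<in> vecs d" "x \<in> vecs d" "form d x x - Y = 1"
  shows "cv d p x y \<in> Xd d"
  using assms cc_form by (auto simp: vecs_def cv_def pperp_def Xd_def)

end

context keyloc begin

lemma MMv_alt:
  assumes "i \<le> d" "j \<le> d"
  shows "MMv d p x y i j = (rv d p x y / t) / X * ell d y p i j"
proof -
  have e1: "MMv d p x y i j = rv d p x y * (1 / (r * sqrt Y)) * ell d y p i j"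
    using assms rsq_pos Ypos by (simp add: MMv_def ell_def av_def bv_def pperp_def field_simps)
  have "r * sqrt Y = t * X" using Yr tX by (simp add: mult.commute)
  then show ?thesis unfolding e1 by simp
qed

lemma cv_alt: "cv d p x y k = x k - ((1 - q) / t^2) * (Y / X) * pperp d p y k"
proof -
  have "(1 - q) * (X * Y / G) = ((1 - q) / t^2) * (Y / X)"
    unfolding t_sq using Gpos Xpos by (simp add: field_simps power2_eq_square)
  then show ?thesis by (simp add: cv_def)
qed

end

definition pv :: "nat \<Rightarrow> real \<Rightarrow> nat \<Rightarrow> real" where
  "pv d s = (\<lambda>k. (1 + s) * unitv d k - unitv (d-1) k)"

lemma wt_d: "wt d d = 1" by (simp add: wt_def)
lemma wt_d1: "2 \<le> d \<Longrightarrow> wt d (d-1) = -1" by (simp add: wt_def)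
lemma wt_d1': "2 \<le> d \<Longrightarrow> wt d (d - Suc 0) = -1" by (simp add: wt_def)

lemma form_pv1:
  assumes "2 \<le> d" shows "form d (pv d s) w = (1 + s) * w d + w (d-1)"
proof -
  have "form d (unitv k) w = (if k \<le> d then wt d k * w k else 0)" for k
    using form_unitv[of d w k] assms by (simp add: form_sym)
  then show ?thesis using assms by (simp add: pv_def wt_d wt_d1')
qed

lemma form_pv2:
  assumes "2 \<le> d" shows "form d w (pv d s) = (1 + s) * w d + w (d-1)"
  using form_pv1[OF assms] by (simp add: form_sym)

lemma pv_d: assumes "1 \<le> d" shows "pv d s d = 1 + s"
proof -
  have "d - 1 \<noteq> d" using assms by arith
  then show ?thesis by (simp add: pv_def unitv_def)
qed
lemma pv_d1: assumes "2 \<le> d" shows "pv d s (d-1) = -1"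
proof -
  have "d - 1 \<noteq> d" using assms by arith
  then show ?thesis by (simp add: pv_def unitv_def)
qed
lemma pv_0: "2 \<le> d \<Longrightarrow> pv d s 0 = 0" by (auto simp: pv_def unitv_def)
lemma pv_vecs: "pv d s \<in> vecs d" by (simp add: pv_def unitv_def vecs_def)

lemma form_sum1: "form d (\<lambda>k. \<Sum>\<mu>\<in>A. g \<mu> k) w = (\<Sum>\<mu>\<in>A. form d (g \<mu>) w)"
  by (simp add: form_def sum_subtractf sum.distrib sum_distrib_right sum.swap[of _ "{Suc 0..d - Suc 0}"])

lemma ell_sum:
  "ell d (\<lambda>k. \<Sum>\<mu>\<in>A. f \<mu> * u \<mu> k) w i j = (\<Sum>\<mu>\<in>A. f \<mu> * ell d (u \<mu>) w i j)"
  by (auto simp: ell_def form_sum1 sum_distrib_left sum_distrib_right sum_subtractf[symmetric] algebra_simps)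

lemma cform:
  "form d (\<lambda>k. complex_of_real (x k) + \<i> * complex_of_real (y k)) (\<lambda>k. complex_of_real (x k) + \<i> * complex_of_real (y k))
   = complex_of_real (form d x x - form d y y) + \<i> * complex_of_real (2 * form d x y)"
  by (simp add: form_sym[of d y x] algebra_simps)

lemma tendsto_form:
  fixes f g :: "'w \<Rightarrow> nat \<Rightarrow> real"
  assumes "1 \<le> d" "\<And>k. k \<le> d \<Longrightarrow> ((\<lambda>w. f w k) \<longlongrightarrow> f0 k) F" "\<And>k. k \<le> d \<Longrightarrow> ((\<lambda>w. g w k) \<longlongrightarrow> g0 k) F"
  shows "((\<lambda>w. form d (f w) (g w)) \<longlongrightarrow> form d f0 g0) F"
  unfolding form_wt[OF assms(1)]
proof (intro tendsto_sum tendsto_mult tendsto_const)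
  fix k assume "k \<in> {..d}"
  then show "((\<lambda>w. f w k) \<longlongrightarrow> f0 k) F" "((\<lambda>w. g w k) \<longlongrightarrow> g0 k) F" using assms(2,3) by auto
qed

lemma tendsto_matdist:
  assumes "\<And>i j. i \<le> d \<Longrightarrow> j \<le> d \<Longrightarrow> ((\<lambda>w. A w i j) \<longlongrightarrow> A0 i j) F"
  shows "((\<lambda>w. matdist d (A w) B) \<longlongrightarrow> matdist d A0 B) F"
  unfolding matdist_def using assms by (auto intro!: tendsto_intros)

lemma tendsto_vdist:
  assumes "\<And>k. k \<le> d \<Longrightarrow> ((\<lambda>w. u w k) \<longlongrightarrow> u0 k) F"
  shows "((\<lambda>w. vdist d (u w) (c :: nat \<Rightarrow> real)) \<longlongrightarrow> vdist d u0 c) F"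
  unfolding vdist_def using assms by (auto intro!: tendsto_intros)


lemma constr_tendsto:
  fixes Xf Yf :: "'w \<Rightarrow> nat \<Rightarrow> real"
  assumes hx: "\<And>k. k \<le> d \<Longrightarrow> ((\<lambda>w. Xf w k) \<longlongrightarrow> x k) F"
    and hy: "\<And>k. k \<le> d \<Longrightarrow> ((\<lambda>w. Yf w k) \<longlongrightarrow> y k) F"
    and K: "keyloc d p x y"
  shows "\<And>i j. i \<le> d \<Longrightarrow> j \<le> d \<Longrightarrow> ((\<lambda>w. MMv d p (Xf w) (Yf w) i j) \<longlongrightarrow> MMv d p x y i j) F"
    and "\<And>k. k \<le> d \<Longrightarrow> ((\<lambda>w. cv d p (Xf w) (Yf w) k) \<longlongrightarrow> cv d p x y k) F"
    and "((\<lambda>w. form d (Yf w) (Yf w)) \<longlongrightarrow> form d y y) F"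
    and "((\<lambda>w. Gv d p (Yf w)) \<longlongrightarrow> Gv d p y) F"
    and "((\<lambda>w. form d (Xf w) p) \<longlongrightarrow> form d x p) F"
proof -
  interpret K: keyloc d p x y by (rule K)
  have d1: "1 \<le> d" by (rule K.d1)
  show Y: "((\<lambda>w. form d (Yf w) (Yf w)) \<longlongrightarrow> form d y y) F"
    by (rule tendsto_form[OF d1 hy hy])
  have pY: "((\<lambda>w. form d p (Yf w)) \<longlongrightarrow> form d p y) F"
    by (rule tendsto_form[OF d1 _ hy]) auto
  show X: "((\<lambda>w. form d (Xf w) p) \<longlongrightarrow> form d x p) F"
    by (rule tendsto_form[OF d1 hx]) auto
  show G: "((\<lambda>w. Gv d p (Yf w)) \<longlongrightarrow> Gv d p y) F"
    unfolding Gv_def by (intro tendsto_intros Y pY)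
  have t: "((\<lambda>w. tv d p (Xf w) (Yf w)) \<longlongrightarrow> tv d p x y) F"
    unfolding tv_def using K.Xpos by (intro tendsto_intros G X) auto
  have r: "((\<lambda>w. rv d p (Xf w) (Yf w)) \<longlongrightarrow> rv d p x y) F"
    unfolding rv_def using K.t_pos K.q_pos by (intro tendsto_intros t) auto
  have pp: "((\<lambda>w. pperp d p (Yf w) k) \<longlongrightarrow> pperp d p y k) F" if "k \<le> d" for k
    unfolding pperp_def using K.Ypos that by (intro tendsto_intros pY Y hy) auto
  have a: "((\<lambda>w. av d p (Yf w) k) \<longlongrightarrow> av d p y k) F" if "k \<le> d" for k
    unfolding av_def using K.Ypos K.Gpos that by (intro tendsto_intros pp G Y) auto
  have b: "((\<lambda>w. bv d (Yf w) k) \<longlongrightarrow> bv d y k) F" if "k \<le> d" for k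
    unfolding bv_def using K.Ypos that by (intro tendsto_intros Y hy) auto
  show "((\<lambda>w. MMv d p (Xf w) (Yf w) i j) \<longlongrightarrow> MMv d p x y i j) F" if "i \<le> d" "j \<le> d" for i j
  proof -
    have e: "MMv d p u w i j = rv d p u w * (av d p w i * (wt d j * bv d w j) - bv d w i * (wt d j * av d p w j))" for u w
      using that d1 by (simp add: MMv_def ell_def form_unitv)
    show ?thesis unfolding e using that by (intro tendsto_intros r a b)
  qed
  show "((\<lambda>w. cv d p (Xf w) (Yf w) k) \<longlongrightarrow> cv d p x y k) F" if "k \<le> d" for k
    unfolding cv_def using K.Gpos that by (intro tendsto_intros t X Y G pp hx) auto
qed


lemma lim_f1: "((\<lambda>t::real. ln ((1+t)/sqrt(1-t^2))/t) \<longlongrightarrow> 1) (at_right 0)" by real_asymp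
lemma lim_f2: "((\<lambda>t::real. (1 - sqrt(1-t^2))/t^2) \<longlongrightarrow> 1/2) (at_right 0)" by real_asymp

lemma stage1:
  assumes d2: "2 \<le> d" and Ypos: "form d y y > 0" and xy: "form d x y = 0"
    and nny: "y d + y (d-1) = 0" and XE: "x d + x (d-1) = E" and Epos: "E > 0"
    and Mlim: "\<And>i j. i \<le> d \<Longrightarrow> j \<le> d \<Longrightarrow> ell d y (pv d 0) i j / E = L i j"
    and clim: "\<And>k. k \<le> d \<Longrightarrow> x k - 1/2 * (form d y y / E) * pv d 0 k = c k"
    and eps: "\<epsilon> > 0"
  shows "eventually (\<lambda>s. keyloc d (pv d s) x y \<and> matdist d (MMv d (pv d s) x y) L < \<epsilon>
            \<and> vdist d (cv d (pv d s) x y) c < \<epsilon>) (at_right 0)"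
proof -
  have d1: "1 \<le> d" using d2 by simp
  define Y where "Y = form d y y"
  have Gs: "Gv d (pv d s) y = s * (2*Y + s*(Y - (y d)^2))" for s
  proof -
    have "form d (pv d s) y = s * y d" using nny by (simp add: form_pv1[OF d2] algebra_simps)
    moreover have "form d (pv d s) (pv d s) = 2 * s + s^2"
      using pv_d1[OF d2, of s] by (simp add: form_pv1[OF d2] pv_d[OF d1] pv_d1[OF d2] power2_eq_square algebra_simps)
    ultimately show ?thesis by (simp add: Gv_def Y_def power2_eq_square algebra_simps)
  qed
  have Xs: "form d x (pv d s) = E + s * x d" for s
    using XE by (simp add: form_pv2[OF d2] algebra_simps)
  have ev_pos: "eventually (\<lambda>s. s > 0) (at_right (0::real))" by (rule eventually_at_right_less)
  have lim1: "((\<lambda>s. 2*Y + s*(Y - (y d)^2)) \<longlongrightarrow> 2*Y + 0*(Y - (y d)^2)) (at_right 0)"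
    by (intro tendsto_intros)
  have ev1: "eventually (\<lambda>s. 2*Y + s*(Y - (y d)^2) > 0) (at_right (0::real))"
    using order_tendstoD(1)[OF lim1, of 0] Ypos by (simp add: Y_def)
  have limX: "((\<lambda>s. E + s * x d) \<longlongrightarrow> E + 0 * x d) (at_right 0)"
    by (intro tendsto_intros)
  have evX: "eventually (\<lambda>s. E + s * x d > 0) (at_right (0::real))"
    using order_tendstoD(1)[OF limX, of 0] Epos by simp
  have limGX: "((\<lambda>s. (E + s * x d)^2 - s * (2*Y + s*(Y - (y d)^2))) \<longlongrightarrow> (E + 0 * x d)^2 - 0 * (2*Y + 0*(Y - (y d)^2))) (at_right 0)"
    by (intro tendsto_intros)
  have evGX: "eventually (\<lambda>s. (E + s * x d)^2 - s * (2*Y + s*(Y - (y d)^2)) > 0) (at_right (0::real))"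
    using order_tendstoD(1)[OF limGX, of 0] Epos by simp
  have evK: "eventually (\<lambda>s. keyloc d (pv d s) x y) (at_right 0)"
    using ev_pos ev1 evX evGX
  proof eventually_elim
    case (elim s)
    show ?case
      by unfold_locales (use d1 xy Ypos elim in \<open>auto simp: Gs Xs Y_def\<close>)
  qed
  have tlim: "((\<lambda>s. tv d (pv d s) x y) \<longlongrightarrow> 0) (at_right 0)"
  proof -
    have "((\<lambda>s. sqrt (s * (2*Y + s*(Y - (y d)^2))) / (E + s * x d)) \<longlongrightarrow>
           sqrt (0 * (2*Y + 0*(Y - (y d)^2))) / (E + 0 * x d)) (at_right 0)"
      using Epos by (intro tendsto_intros) auto
    then show ?thesis by (simp add: tv_def Gs Xs)
  qed
  have tpos: "eventually (\<lambda>s. tv d (pv d s) x y > 0) (at_right 0)"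
    using evK by eventually_elim (rule keyloc.t_pos)
  have tfl: "filterlim (\<lambda>s. tv d (pv d s) x y) (at_right 0) (at_right 0)"
    by (rule tendsto_imp_filterlim_at_right[OF tlim tpos])
  have f1: "((\<lambda>s. rv d (pv d s) x y / tv d (pv d s) x y) \<longlongrightarrow> 1) (at_right 0)"
    using filterlim_compose[OF lim_f1 tfl] by (simp add: rv_def)
  have f2: "((\<lambda>s. (1 - sqrt (1 - (tv d (pv d s) x y)^2)) / (tv d (pv d s) x y)^2) \<longlongrightarrow> 1/2) (at_right 0)"
    using filterlim_compose[OF lim_f2 tfl] by simp
  have ell_s: "ell d y (pv d s) i j = ell d y (pv d 0) i j + s * (if i \<le> d \<and> j \<le> d then y i * wt d j * unitv d j - unitv d i * wt d j * y j else 0)" for s i j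
    using d1 by (simp add: ell_def form_unitv pv_def algebra_simps)
  have Mlim': "((\<lambda>s. MMv d (pv d s) x y i j) \<longlongrightarrow> L i j) (at_right 0)" if ij: "i \<le> d" "j \<le> d" for i j
  proof -
    define A where "A = ell d y (pv d 0) i j"
    define B where "B = (if i \<le> d \<and> j \<le> d then y i * wt d j * unitv d j - unitv d i * wt d j * y j else (0::real))"
    have eA: "ell d y (pv d s) i j = A + s * B" for s unfolding A_def B_def by (rule ell_s)
    have "((\<lambda>s. (rv d (pv d s) x y / tv d (pv d s) x y) / (E + s * x d) * (A + s * B))
       \<longlongrightarrow> 1 / (E + 0 * x d) * (A + 0 * B)) (at_right 0)"
      using Epos by (intro tendsto_intros f1) auto
    moreover have "1 / (E + 0 * x d) * (A + 0 * B) = L i j"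
      using Mlim[OF ij] unfolding A_def by simp
    ultimately have l: "((\<lambda>s. (rv d (pv d s) x y / tv d (pv d s) x y) / (E + s * x d) * (A + s * B)) \<longlongrightarrow> L i j) (at_right 0)"
      by simp
    have "eventually (\<lambda>s. (rv d (pv d s) x y / tv d (pv d s) x y) / (E + s * x d) * (A + s * B)
        = MMv d (pv d s) x y i j) (at_right 0)"
      using evK
    proof eventually_elim
      case (elim s)
      show ?case unfolding keyloc.MMv_alt[OF elim ij] Xs eA ..
    qed
    then show ?thesis using l by (rule Lim_transform_eventually[rotated])
  qed
  have pp_s: "pperp d (pv d s) y k = pv d 0 k + s * (unitv d k - (y d / Y) * y k)" for s k
  proof -
    have "y (d-1) = - y d" using nny by simp
    then show ?thesis unfolding pperp_def form_pv1[OF d2] Y_def by (simp add: pv_def algebra_simps)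
  qed
  have clim': "((\<lambda>s. cv d (pv d s) x y k) \<longlongrightarrow> c k) (at_right 0)" if k: "k \<le> d" for k
  proof -
    define A where "A = pv d 0 k"
    define B where "B = unitv d k - (y d / Y) * y k"
    define T where "T = (\<lambda>s. tv d (pv d s) x y)"
    have eA: "pperp d (pv d s) y k = A + s * B" for s unfolding A_def B_def by (rule pp_s)
    have "((\<lambda>s. x k - ((1 - sqrt (1 - (T s)^2)) / (T s)^2) * (Y / (E + s * x d)) * (A + s * B))
       \<longlongrightarrow> x k - 1/2 * (Y / (E + 0 * x d)) * (A + 0 * B)) (at_right 0)"
      using Epos unfolding T_def by (intro tendsto_intros f2) auto
    moreover have "x k - 1/2 * (Y / (E + 0 * x d)) * (A + 0 * B) = c k"
      using clim[OF k] unfolding A_def Y_def by simp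
    ultimately have l: "((\<lambda>s. x k - ((1 - sqrt (1 - (T s)^2)) / (T s)^2) * (Y / (E + s * x d)) * (A + s * B)) \<longlongrightarrow> c k) (at_right 0)"
      by simp
    have "eventually (\<lambda>s. x k - ((1 - sqrt (1 - (T s)^2)) / (T s)^2) * (Y / (E + s * x d)) * (A + s * B)
        = cv d (pv d s) x y k) (at_right 0)"
      using evK
    proof eventually_elim
      case (elim s)
      show ?case unfolding keyloc.cv_alt[OF elim] Xs eA T_def Y_def ..
    qed
    then show ?thesis using l by (rule Lim_transform_eventually[rotated])
  qed
  have md: "((\<lambda>s. matdist d (MMv d (pv d s) x y) L) \<longlongrightarrow> matdist d L L) (at_right 0)"
    by (rule tendsto_matdist) (rule Mlim')
  have vd: "((\<lambda>s. vdist d (cv d (pv d s) x y) c) \<longlongrightarrow> vdist d c c) (at_right 0)"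
    by (rule tendsto_vdist) (rule clim')
  have "matdist d L L = 0" by (simp add: matdist_def)
  moreover have "vdist d c c = 0" by (simp add: vdist_def)
  ultimately have e2: "eventually (\<lambda>s. matdist d (MMv d (pv d s) x y) L < \<epsilon>) (at_right 0)"
      "eventually (\<lambda>s. vdist d (cv d (pv d s) x y) c < \<epsilon>) (at_right 0)"
    using order_tendstoD(2)[OF md, of \<epsilon>] order_tendstoD(2)[OF vd, of \<epsilon>] eps by auto
  show ?thesis using evK e2 by eventually_elim auto
qed


lemma form_cong:
  assumes "\<And>k. k \<le> d \<Longrightarrow> u k = u' k" "\<And>k. k \<le> d \<Longrightarrow> w k = w' k"
  shows "form d u w = form d u' w'"
  using assms unfolding form_def by (auto intro!: sum.cong)

lemma expi_out: "d < k \<Longrightarrow> expi_apply d M c k = 0"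
  by (simp add: expi_apply_def mapply_def)

lemma coord_tendsto:
  fixes z :: "nat \<Rightarrow> complex"
  assumes "k \<le> d"
  shows "((\<lambda>w. w k) \<longlongrightarrow> z k) (filtercomap (\<lambda>w. vdist d w z) (nhds 0))"
proof -
  have hz: "((\<lambda>w. vdist d w z) \<longlongrightarrow> 0) (filtercomap (\<lambda>w. vdist d w z) (nhds 0))"
    by (rule filterlim_filtercomap)
  have le: "dist (w k) (z k) \<le> vdist d w z" for w
  proof -
    have "(norm (w k - z k))^2 \<le> (\<Sum>i\<le>d. (norm (w i - z i))^2)"
      using assms by (intro member_le_sum) auto
    then have "sqrt ((norm (w k - z k))^2) \<le> vdist d w z"
      unfolding vdist_def by (rule real_sqrt_le_mono)
    then show ?thesis by (simp add: dist_norm)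
  qed
  show ?thesis
  proof (rule tendstoI)
    fix e :: real assume "e > 0"
    from order_tendstoD(2)[OF hz this]
    show "eventually (\<lambda>w. dist (w k) (z k) < e) (filtercomap (\<lambda>w. vdist d w z) (nhds 0))"
      by eventually_elim (use le in \<open>auto intro: le_less_trans\<close>)
  qed
qed

lemma Xdc_parts:
  assumes "w \<in> Xdc d"
  shows "form d (\<lambda>k. Re (w k)) (\<lambda>k. Re (w k)) - form d (\<lambda>k. Im (w k)) (\<lambda>k. Im (w k)) = 1"
    and "form d (\<lambda>k. Re (w k)) (\<lambda>k. Im (w k)) = 0"
    and "(\<lambda>k. Re (w k)) \<in> vecs d" "(\<lambda>k. Im (w k)) \<in> vecs d"
proof -
  have w: "w = (\<lambda>k. complex_of_real (Re (w k)) + \<i> * complex_of_real (Im (w k)))"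
    by (auto intro!: ext simp: complex_eq_iff)
  have "form d w w = 1" using assms by (simp add: Xdc_def)
  then have "complex_of_real (form d (\<lambda>k. Re (w k)) (\<lambda>k. Re (w k)) - form d (\<lambda>k. Im (w k)) (\<lambda>k. Im (w k)))
       + \<i> * complex_of_real (2 * form d (\<lambda>k. Re (w k)) (\<lambda>k. Im (w k))) = 1"
    by (subst (asm) w, subst (asm) w) (simp only: cform)
  then show "form d (\<lambda>k. Re (w k)) (\<lambda>k. Re (w k)) - form d (\<lambda>k. Im (w k)) (\<lambda>k. Im (w k)) = 1"
    and "form d (\<lambda>k. Re (w k)) (\<lambda>k. Im (w k)) = 0"
    by (auto simp: complex_eq_iff)
  show "(\<lambda>k. Re (w k)) \<in> vecs d" "(\<lambda>k. Im (w k)) \<in> vecs d"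
    using assms by (auto simp: Xdc_def vecs_def)
qed

lemma stage2:
  fixes z :: "nat \<Rightarrow> complex"
  assumes d2: "2 \<le> d" and K: "keyloc d (pv d s) x0 y0" and spos: "s > 0" and y00: "y0 0 > 0"
    and zc: "\<And>k. k \<le> d \<Longrightarrow> z k = complex_of_real (x0 k) + \<i> * complex_of_real (y0 k)"
    and md: "matdist d (MMv d (pv d s) x0 y0) L < \<epsilon>" and vd: "vdist d (cv d (pv d s) x0 y0) c < \<epsilon>"
  shows "\<exists>\<delta>>0. \<forall>w\<in>Xdc d. vdist d w z < \<delta> \<longrightarrow>
            (\<exists>M''\<in>Cplus d. \<exists>c''\<in>Xd d. matdist d M'' L < \<epsilon> \<and> vdist d c'' c < \<epsilon>
                \<and> w = expi_apply d M'' c'')"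
proof -
  interpret K: keyloc d "pv d s" x0 y0 by (rule K)
  have d1: "1 \<le> d" using d2 by simp
  define F where "F = filtercomap (\<lambda>w. vdist d w z) (nhds 0)"
  define p where "p = pv d s"
  have hx: "((\<lambda>w. Re (w k)) \<longlongrightarrow> x0 k) F" if "k \<le> d" for k
    using tendsto_Re[OF coord_tendsto[OF that, of z]] zc[OF that] by (simp add: F_def)
  have hy: "((\<lambda>w. Im (w k)) \<longlongrightarrow> y0 k) F" if "k \<le> d" for k
    using tendsto_Im[OF coord_tendsto[OF that, of z]] zc[OF that] by (simp add: F_def)
  note CT = constr_tendsto[where Xf="\<lambda>w k. Re (w k)" and Yf = "\<lambda>w k. Im (w k)", OF hx hy K]
  have ev1: "eventually (\<lambda>w. form d (\<lambda>k. Im (w k)) (\<lambda>k. Im (w k)) > 0) F"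
    using order_tendstoD(1)[OF CT(3) K.Ypos] .
  have ev2: "eventually (\<lambda>w. Gv d p (\<lambda>k. Im (w k)) > 0) F"
    using order_tendstoD(1)[OF CT(4) K.Gpos] by (simp add: p_def)
  have ev3: "eventually (\<lambda>w. form d (\<lambda>k. Re (w k)) p > 0) F"
    using order_tendstoD(1)[OF CT(5) K.Xpos] by (simp add: p_def)
  have ev4: "eventually (\<lambda>w. (form d (\<lambda>k. Re (w k)) p)^2 - Gv d p (\<lambda>k. Im (w k)) > 0) F"
  proof -
    have "((\<lambda>w. (form d (\<lambda>k. Re (w k)) p)^2 - Gv d p (\<lambda>k. Im (w k))) \<longlongrightarrow> (form d x0 p)^2 - Gv d p y0) F"
      unfolding p_def by (intro tendsto_intros CT(4,5))
    moreover have "(form d x0 p)^2 - Gv d p y0 > 0" using K.GX by (simp add: p_def)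
    ultimately show ?thesis by (rule order_tendstoD(1))
  qed
  have ev5: "eventually (\<lambda>w. Im (w 0) > 0) F"
    using order_tendstoD(1)[OF hy[of 0] y00] by simp
  have ev6: "eventually (\<lambda>w. matdist d (MMv d p (\<lambda>k. Re (w k)) (\<lambda>k. Im (w k))) L < \<epsilon>) F"
    using order_tendstoD(2)[OF tendsto_matdist[OF CT(1)] md] by (simp add: p_def)
  have ev7: "eventually (\<lambda>w. vdist d (cv d p (\<lambda>k. Re (w k)) (\<lambda>k. Im (w k))) c < \<epsilon>) F"
    using order_tendstoD(2)[OF tendsto_vdist[OF CT(2)] vd] by (simp add: p_def)
  define P where "P = (\<lambda>w. form d (\<lambda>k. Im (w k)) (\<lambda>k. Im (w k)) > 0 \<and> Gv d p (\<lambda>k. Im (w k)) > 0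
     \<and> form d (\<lambda>k. Re (w k)) p > 0 \<and> (form d (\<lambda>k. Re (w k)) p)^2 - Gv d p (\<lambda>k. Im (w k)) > 0
     \<and> Im (w 0) > 0 \<and> matdist d (MMv d p (\<lambda>k. Re (w k)) (\<lambda>k. Im (w k))) L < \<epsilon>
     \<and> vdist d (cv d p (\<lambda>k. Re (w k)) (\<lambda>k. Im (w k))) c < \<epsilon>)"
  have "eventually P F"
    using ev1 ev2 ev3 ev4 ev5 ev6 ev7 unfolding P_def by eventually_elim auto
  then obtain Q where Q: "eventually Q (nhds 0)" and QP: "\<And>w. Q (vdist d w z) \<Longrightarrow> P w"
    unfolding F_def eventually_filtercomap by blast
  from Q obtain \<delta> where \<delta>: "\<delta> > 0" and \<delta>Q: "\<And>r. dist r 0 < \<delta> \<Longrightarrow> Q r"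
    unfolding eventually_nhds_metric by blast
  have vd0: "vdist d w z \<ge> 0" for w :: "nat \<Rightarrow> complex" by (simp add: vdist_def sum_nonneg)
  show ?thesis
  proof (intro exI[of _ \<delta>] conjI ballI impI \<delta>)
    fix w assume w: "w \<in> Xdc d" and wd: "vdist d w z < \<delta>"
    have "P w" using QP \<delta>Q wd vd0[of w] by (simp add: dist_real_def)
    then have P1: "form d (\<lambda>k. Im (w k)) (\<lambda>k. Im (w k)) > 0" and P2: "Gv d p (\<lambda>k. Im (w k)) > 0"
      and P3: "form d (\<lambda>k. Re (w k)) p > 0" and P4: "Gv d p (\<lambda>k. Im (w k)) < (form d (\<lambda>k. Re (w k)) p)^2"
      and P5: "Im (w 0) > 0" and P6: "matdist d (MMv d p (\<lambda>k. Re (w k)) (\<lambda>k. Im (w k))) L < \<epsilon>"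
      and P7: "vdist d (cv d p (\<lambda>k. Re (w k)) (\<lambda>k. Im (w k))) c < \<epsilon>"
      unfolding P_def by auto
    note W = Xdc_parts[OF w]
    interpret W: keyloc d p "\<lambda>k. Re (w k)" "\<lambda>k. Im (w k)"
      by unfold_locales (use d1 W(2) P1 P2 P3 P4 in auto)
    have ori: "Im (w 0) * p d - Im (w d) * p 0 > 0"
      using P5 spos by (simp add: p_def pv_d[OF d1] pv_0[OF d2])
    have M: "MMv d p (\<lambda>k. Re (w k)) (\<lambda>k. Im (w k)) \<in> Cplus d"
      by (rule W.key_Cplus[OF _ W(4) ori]) (simp add: p_def pv_vecs)
    have C: "cv d p (\<lambda>k. Re (w k)) (\<lambda>k. Im (w k)) \<in> Xd d"
      by (rule W.key_Xd[OF _ W(4) W(3) W(1)]) (simp add: p_def pv_vecs)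
    have E: "w = expi_apply d (MMv d p (\<lambda>k. Re (w k)) (\<lambda>k. Im (w k))) (cv d p (\<lambda>k. Re (w k)) (\<lambda>k. Im (w k)))"
    proof
      fix k show "w k = expi_apply d (MMv d p (\<lambda>k. Re (w k)) (\<lambda>k. Im (w k))) (cv d p (\<lambda>k. Re (w k)) (\<lambda>k. Im (w k))) k"
      proof (cases "k \<le> d")
        case True
        then show ?thesis by (simp add: W.key_expi complex_eq_iff)
      next
        case False
        then show ?thesis using w by (simp add: expi_out Xdc_def vecs_def)
      qed
    qed
    show "\<exists>M''\<in>Cplus d. \<exists>c''\<in>Xd d. matdist d M'' L < \<epsilon> \<and> vdist d c'' c < \<epsilon> \<and> w = expi_apply d M'' c''"
      using M C P6 P7 E by blast
  qed
qed


theorem lemma16: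
  fixes d :: nat and v :: real and c :: "nat \<Rightarrow> real" and L :: "nat \<Rightarrow> nat \<Rightarrow> real"
  assumes "d \<ge> 2" and "c \<in> Mv d v" and "L \<in> Gamma_dd1 d"
  shows "(\<forall>\<epsilon>>0. \<exists>M\<in>Cplus d. \<exists>c'\<in>Xd d.
            matdist d M L < \<epsilon> \<and> vdist d c' c < \<epsilon> \<and> expi_apply d L c = expi_apply d M c')
       \<and> (\<forall>\<epsilon>>0. \<exists>\<delta>>0. \<forall>z''\<in>Xdc d. vdist d z'' (expi_apply d L c) < \<delta> \<longrightarrow>
            (\<exists>M''\<in>Cplus d. \<exists>c''\<in>Xd d. matdist d M'' L < \<epsilon> \<and> vdist d c'' c < \<epsilon>
                \<and> z'' = expi_apply d M'' c''))"
proof -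
  note d2 = assms(1)
  have d1: "1 \<le> d" using d2 by simp
  from assms(2) have cvec: "c \<in> vecs d" and ccf: "form d c c = 1" and cvv: "c (d-1) + c d = exp v"
    unfolding Mv_def Xd_def by auto
  from assms(3) obtain b where Ldef: "L = (\<lambda>i j. \<Sum>\<mu>\<in>{0..d-2}. b \<mu> * Lmu d \<mu> i j)"
    and bpos: "b 0 > sqrt (\<Sum>j\<in>{1..d-2}. (b j)^2)"
    unfolding Gamma_dd1_def by auto
  define nn where "nn = pv d 0"
  define \<beta> where "\<beta> = (\<lambda>k. \<Sum>\<mu>\<in>{0..d-2}. b \<mu> * unitv \<mu> k)"
  have nn_eq: "(\<lambda>j. unitv d j - unitv (d-1) j) = nn" by (simp add: nn_def pv_def)
  have Lell: "L = ell d \<beta> nn"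
    unfolding Ldef Lmu_def \<beta>_def nn_eq by (intro ext) (simp add: ell_sum)
  have \<beta>k: "\<beta> k = (if k \<le> d-2 then b k else 0)" for k
  proof -
    have "\<beta> k = (\<Sum>\<mu>\<in>{0..d-2}. if \<mu> = k then b \<mu> else 0)"
      unfolding \<beta>_def by (intro sum.cong) (auto simp: unitv_def)
    then show ?thesis by simp
  qed
  have \<beta>vec: "\<beta> \<in> vecs d" using d2 by (auto simp: vecs_def \<beta>k)
  have \<beta>d: "\<beta> d = 0" "\<beta> (d-1) = 0" using d2 by (auto simp: \<beta>k)
  have \<beta>0: "\<beta> 0 = b 0" by (simp add: \<beta>k)
  have fnn1: "form d nn w = w d + w (d-1)" for w unfolding nn_def using form_pv1[OF d2, of 0 w] by simp
  have fnn2: "form d w nn = w d + w (d-1)" for w unfolding nn_def using form_pv2[OF d2, of w 0] by simp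
  have nnd: "nn d = 1" "nn (d-1) = -1" "nn 0 = 0"
    unfolding nn_def using pv_d[OF d1, of 0] pv_d1[OF d2, of 0] pv_0[OF d2, of 0] by auto
  have bn: "form d \<beta> nn = 0" using fnn2 \<beta>d by simp
  have nb: "form d nn \<beta> = 0" using fnn1 \<beta>d by simp
  have nnn: "form d nn nn = 0" using fnn1 nnd by simp
  define E where "E = exp v"
  have Epos: "E > 0" by (simp add: E_def)
  have nc: "form d nn c = E" using fnn1 cvv by (simp add: E_def add.commute)
  have cn: "form d c nn = E" using fnn2 cvv by (simp add: E_def add.commute)
  define B where "B = form d \<beta> \<beta>"
  have Bpos: "B > 0"
  proof -
    define S where "S = (\<Sum>j\<in>{1..d-2}. (b j)^2)"
    have S0: "S \<ge> 0" unfolding S_def by (simp add: sum_nonneg)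
    have "(sqrt S)^2 < (b 0)^2"
      using bpos S0 by (intro power_strict_mono) (auto simp: S_def)
    then have Sb: "S < (b 0)^2" using S0 by simp
    have ins: "{1..d-1} = insert (d-1) {1..d-2}" using d2 by auto
    have sS: "(\<Sum>j\<in>{1..d-2}. \<beta> j * \<beta> j) = S"
      unfolding S_def by (intro sum.cong) (auto simp: \<beta>k power2_eq_square)
    have nin: "d - Suc 0 \<notin> {Suc 0..d-2}" using d2 by auto
    then have "B = (b 0)^2 - S"
      unfolding B_def form_def ins using \<beta>d \<beta>0 d2 nin sS by (simp add: power2_eq_square)
    then show ?thesis using Sb by simp
  qed
  define x0 where "x0 = (\<lambda>k. c k + B * E / 2 * nn k)"
  define y0 where "y0 = (\<lambda>k. E * \<beta> k - form d \<beta> c * nn k)"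
  interpret N: nil d \<beta> nn by unfold_locales (use d1 bn nnn in auto)
  define z where "z = expi_apply d L c"
  have zc: "z k = complex_of_real (x0 k) + \<i> * complex_of_real (y0 k)" if "k \<le> d" for k
    unfolding z_def Lell N.expi_nil[OF that] x0_def y0_def nc B_def by (simp add: algebra_simps)
  have bc: "form d c \<beta> = form d \<beta> c" by (rule form_sym)
  have xy: "form d x0 y0 = 0"
    unfolding x0_def y0_def using bc cn nb nnn by (simp add: algebra_simps)
  have Y0: "form d y0 y0 = E^2 * B"
    unfolding y0_def B_def using bn nb nnn by (simp add: form_sym[of d c \<beta>] algebra_simps power2_eq_square)
  have xx: "form d x0 x0 - form d y0 y0 = 1"
    unfolding Y0 unfolding x0_def using ccf cn nc nnn by (simp add: power2_eq_square algebra_simps)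
  have Ypos: "form d y0 y0 > 0" unfolding Y0 using Epos Bpos by simp
  have y00: "y0 0 > 0" using Epos bpos \<beta>0 nnd by (simp add: y0_def) (smt (verit) real_sqrt_ge_zero mult_pos_pos sum_nonneg zero_le_power2)
  have nny: "y0 d + y0 (d-1) = 0" using fnn1[of y0] nb nnn by (simp add: y0_def algebra_simps)
  have XE: "x0 d + x0 (d-1) = E" using fnn1[of x0] nc nnn by (simp add: x0_def algebra_simps)
  have Mlim: "ell d y0 (pv d 0) i j / E = L i j" if "i \<le> d" "j \<le> d" for i j
  proof -
    have "ell d y0 nn i j = E * ell d \<beta> nn i j"
      using that by (simp add: ell_def y0_def algebra_simps)
    then show ?thesis using Epos by (simp add: Lell nn_def[symmetric])
  qed
  have clim: "x0 k - 1/2 * (form d y0 y0 / E) * pv d 0 k = c k" if "k \<le> d" for k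
    using Epos unfolding Y0 x0_def nn_def[symmetric] by (simp add: power2_eq_square)
  have zX: "z \<in> Xdc d"
  proof -
    have "form d z z = form d (\<lambda>k. complex_of_real (x0 k) + \<i> * complex_of_real (y0 k)) (\<lambda>k. complex_of_real (x0 k) + \<i> * complex_of_real (y0 k))"
      by (rule form_cong) (simp_all add: zc)
    also have "\<dots> = 1" unfolding cform xx xy by simp
    finally show ?thesis unfolding Xdc_def vecs_def using expi_out z_def by auto
  qed
  have main: "\<forall>\<epsilon>>0. \<exists>\<delta>>0. \<forall>w\<in>Xdc d. vdist d w z < \<delta> \<longrightarrow>
            (\<exists>M''\<in>Cplus d. \<exists>c''\<in>Xd d. matdist d M'' L < \<epsilon> \<and> vdist d c'' c < \<epsilon>
                \<and> w = expi_apply d M'' c'')"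
  proof (intro allI impI)
    fix \<epsilon> :: real assume eps: "\<epsilon> > 0"
    have "eventually (\<lambda>s. s > 0 \<and> keyloc d (pv d s) x0 y0 \<and> matdist d (MMv d (pv d s) x0 y0) L < \<epsilon>
            \<and> vdist d (cv d (pv d s) x0 y0) c < \<epsilon>) (at_right 0)"
    proof -
      have e1: "eventually (\<lambda>s. keyloc d (pv d s) x0 y0 \<and> matdist d (MMv d (pv d s) x0 y0) L < \<epsilon>
            \<and> vdist d (cv d (pv d s) x0 y0) c < \<epsilon>) (at_right 0)"
        by (rule stage1[OF d2 Ypos xy nny XE Epos Mlim clim eps])
      have e0: "eventually (\<lambda>s. s > (0::real)) (at_right 0)" by (rule eventually_at_right_less)
      show ?thesis using e0 e1 by eventually_elim auto
    qed
    then obtain s where s: "s > 0" "keyloc d (pv d s) x0 y0" "matdist d (MMv d (pv d s) x0 y0) L < \<epsilon>"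
      "vdist d (cv d (pv d s) x0 y0) c < \<epsilon>"
    proof -
      have nb: "at_right (0::real) \<noteq> bot" using trivial_limit_at_right_real[of 0] by (simp add: trivial_limit_def)
      show ?thesis using eventually_happens'[OF nb \<open>eventually _ (at_right 0)\<close>] that by blast
    qed
    show "\<exists>\<delta>>0. \<forall>w\<in>Xdc d. vdist d w z < \<delta> \<longrightarrow>
            (\<exists>M''\<in>Cplus d. \<exists>c''\<in>Xd d. matdist d M'' L < \<epsilon> \<and> vdist d c'' c < \<epsilon>
                \<and> w = expi_apply d M'' c'')"
      by (rule stage2[OF d2 s(2) s(1) y00 zc s(3) s(4)])
  qed
  have part1: "\<forall>\<epsilon>>0. \<exists>M\<in>Cplus d. \<exists>c'\<in>Xd d.
            matdist d M L < \<epsilon> \<and> vdist d c' c < \<epsilon> \<and> expi_apply d L c = expi_apply d M c'"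
  proof (intro allI impI)
    fix \<epsilon> :: real assume eps: "\<epsilon> > 0"
    obtain \<delta> where "\<delta> > 0" and H: "\<forall>w\<in>Xdc d. vdist d w z < \<delta> \<longrightarrow>
            (\<exists>M''\<in>Cplus d. \<exists>c''\<in>Xd d. matdist d M'' L < \<epsilon> \<and> vdist d c'' c < \<epsilon>
                \<and> w = expi_apply d M'' c'')" using main eps by blast
    have "vdist d z z < \<delta>" using \<open>\<delta> > 0\<close> by (simp add: vdist_def)
    then show "\<exists>M\<in>Cplus d. \<exists>c'\<in>Xd d.
            matdist d M L < \<epsilon> \<and> vdist d c' c < \<epsilon> \<and> expi_apply d L c = expi_apply d M c'"
      using H zX unfolding z_def by blast
  qed
  show ?thesis using part1 main unfolding z_def by blast
qed


end
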